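(* Let $G$ be a graph with no induced $P_7$, $C_4$, $C_6$ or $C_7$, let $H=(B_1,\dots,B_5)$ be a maximal nice blowup of $C_5$ in $G$, and for each $j$ let $q_j$ be a fixed vertex of $B_j$ complete to $B_{j-1}\cup B_{j+1}$. Let $i\in\{1,\dots,5\}$, let $x\in A_3(i)$, and suppose $B_i\setminus N(x)$ is anticomplete to $N_{B_{i+1}}(x)$. Then: (1) $q_i\in N_{B_i}(x)$ and $q_{i+1}\in B_{i+1}\setminus N(x)$; (2) $N_{B_i}(x)$ is complete to $N_{B_j}(x)$ for $j\in\{i-1,i+1\}$; (3) for any $a\in B_i\setminus N(x)$ and $b\in N_{B_i}(x)$, $N_{B_{i-1}\cup B_{i+1}}(a)\subsetneq N_{B_{i-1}\cup B_{i+1}}(b)$; (4) for any $a\in B_{i-1}\setminus N(x)$ and $b\in N_{B_{i-1}}(x)$, $N_{B_{i-2}\cup B_i}(a)\subseteq N_{B_{i-2}\cup B_i}(b)$; consequently there is a vertex in $N_{B_{i-1}}(x)$ complete to $B_{i-2}\cup B_i$.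
   Context: Indices modulo $5$. A nice blowup of $C_5$ is a tuple $(B_1,\dots,B_5)$ of pairwise disjoint cliques such that every vertex of $B_j$ has a neighbor in $B_{j-1}$ and in $B_{j+1}$, $B_j$ is anticomplete to $B_{j+2}$, and there are no $a\in B_j$, distinct $b,c\in B_{j+1}$, $d\in B_{j+2}$ with $G[\{a,b,c,d\}]\cong P_4$; $V(H)=\bigcup B_j$; maximal means no nice blowup has vertex set strictly containing $V(H)$. (Such vertices $q_j$ exist.) For $v\notin V(H)$, $\operatorname{supp}(v)$ is the set of $j$ such that $v$ has a neighbor in $B_j$; $A_3(i)=\{v\notin V(H):\operatorname{supp}(v)=\{i-1,i,i+1\}\}$. $N(x)$ is the neighborhood of $x$ and $N_S(x)=N(x)\cap S$. *)

theory Defs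
  imports Main
begin

definition graph :: "'a set \<Rightarrow> ('a \<Rightarrow> 'a \<Rightarrow> bool) \<Rightarrow> bool" where
  "graph V E \<longleftrightarrow> finite V \<and> (\<forall>x y. E x y \<longrightarrow> E y x) \<and> (\<forall>x. \<not> E x x)"

definition induced_path :: "('a \<Rightarrow> 'a \<Rightarrow> bool) \<Rightarrow> 'a list \<Rightarrow> bool" where
  "induced_path E xs \<longleftrightarrow> distinct xs \<and>
     (\<forall>i<length xs. \<forall>j<length xs. E (xs!i) (xs!j) \<longleftrightarrow> (i = j + 1 \<or> j = i + 1))"

definition induced_cycle :: "('a \<Rightarrow> 'a \<Rightarrow> bool) \<Rightarrow> 'a list \<Rightarrow> bool" where
  "induced_cycle E xs \<longleftrightarrow> distinct xs \<and>
     (\<forall>i<length xs. \<forall>j<length xs. E (xs!i) (xs!j) \<longleftrightarrow>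
         (i = (j + 1) mod length xs \<or> j = (i + 1) mod length xs))"

definition has_induced_P :: "'a set \<Rightarrow> ('a \<Rightarrow> 'a \<Rightarrow> bool) \<Rightarrow> nat \<Rightarrow> bool" where
  "has_induced_P V E k \<longleftrightarrow> (\<exists>xs. set xs \<subseteq> V \<and> length xs = k \<and> induced_path E xs)"

definition has_induced_C :: "'a set \<Rightarrow> ('a \<Rightarrow> 'a \<Rightarrow> bool) \<Rightarrow> nat \<Rightarrow> bool" where
  "has_induced_C V E k \<longleftrightarrow> (\<exists>xs. set xs \<subseteq> V \<and> length xs = k \<and> induced_cycle E xs)"

definition induces_P4 :: "('a \<Rightarrow> 'a \<Rightarrow> bool) \<Rightarrow> 'a set \<Rightarrow> bool" where
  "induces_P4 E S \<longleftrightarrow> (\<exists>xs. set xs = S \<and> length xs = 4 \<and> induced_path E xs)"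

definition clique :: "('a \<Rightarrow> 'a \<Rightarrow> bool) \<Rightarrow> 'a set \<Rightarrow> bool" where
  "clique E S \<longleftrightarrow> (\<forall>x\<in>S. \<forall>y\<in>S. x \<noteq> y \<longrightarrow> E x y)"

definition complete :: "('a \<Rightarrow> 'a \<Rightarrow> bool) \<Rightarrow> 'a set \<Rightarrow> 'a set \<Rightarrow> bool" where
  "complete E S T \<longleftrightarrow> (\<forall>x\<in>S. \<forall>y\<in>T. E x y)"

definition anticomplete :: "('a \<Rightarrow> 'a \<Rightarrow> bool) \<Rightarrow> 'a set \<Rightarrow> 'a set \<Rightarrow> bool" where
  "anticomplete E S T \<longleftrightarrow> (\<forall>x\<in>S. \<forall>y\<in>T. \<not> E x y)"

definition nbhd :: "'a set \<Rightarrow> ('a \<Rightarrow> 'a \<Rightarrow> bool) \<Rightarrow> 'a \<Rightarrow> 'a set" where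
  "nbhd V E x = {y \<in> V. E x y}"

(* Indices of C_5 are 0..4, arithmetic mod 5. A blowup is B :: nat => 'a set;
   only B 0, ..., B 4 are relevant. *)
definition nice_blowup :: "'a set \<Rightarrow> ('a \<Rightarrow> 'a \<Rightarrow> bool) \<Rightarrow> (nat \<Rightarrow> 'a set) \<Rightarrow> bool" where
  "nice_blowup V E B \<longleftrightarrow>
     (\<forall>j<5. B j \<subseteq> V \<and> clique E (B j)) \<and>
     (\<forall>j<5. \<forall>k<5. j \<noteq> k \<longrightarrow> B j \<inter> B k = {}) \<and>
     (\<forall>j<5. \<forall>v\<in>B j. (\<exists>u\<in>B ((j + 4) mod 5). E v u) \<and> (\<exists>u\<in>B ((j + 1) mod 5). E v u)) \<and>
     (\<forall>j<5. anticomplete E (B j) (B ((j + 2) mod 5))) \<and>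
     (\<forall>j<5. \<not> (\<exists>a\<in>B j. \<exists>b\<in>B ((j + 1) mod 5). \<exists>c\<in>B ((j + 1) mod 5). \<exists>d\<in>B ((j + 2) mod 5).
              b \<noteq> c \<and> induces_P4 E {a, b, c, d}))"

definition VH :: "(nat \<Rightarrow> 'a set) \<Rightarrow> 'a set" where
  "VH B = (\<Union>j<5. B j)"

definition maximal_nice_blowup :: "'a set \<Rightarrow> ('a \<Rightarrow> 'a \<Rightarrow> bool) \<Rightarrow> (nat \<Rightarrow> 'a set) \<Rightarrow> bool" where
  "maximal_nice_blowup V E B \<longleftrightarrow> nice_blowup V E B \<and>
     \<not> (\<exists>B'. nice_blowup V E B' \<and> VH B \<subset> VH B')"

definition supp :: "('a \<Rightarrow> 'a \<Rightarrow> bool) \<Rightarrow> (nat \<Rightarrow> 'a set) \<Rightarrow> 'a \<Rightarrow> nat set" where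
  "supp E B v = {j. j < 5 \<and> (\<exists>u\<in>B j. E v u)}"

definition A3 :: "'a set \<Rightarrow> ('a \<Rightarrow> 'a \<Rightarrow> bool) \<Rightarrow> (nat \<Rightarrow> 'a set) \<Rightarrow> nat \<Rightarrow> 'a set" where
  "A3 V E B i = {v \<in> V - VH B. supp E B v = {(i + 4) mod 5, i mod 5, (i + 1) mod 5}}"

end

theory Submission
  imports Defs
begin
lemma all4: "(\<forall>i<(4::nat). P i) = (P 0 \<and> P 1 \<and> P 2 \<and> P 3)"
  by (simp add: numeral_eq_Suc All_less_Suc2)
lemma all6: "(\<forall>i<(6::nat). P i) = (P 0 \<and> P 1 \<and> P 2 \<and> P 3 \<and> P 4 \<and> P 5)"
  by (simp add: numeral_eq_Suc All_less_Suc2)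

lemma mkC4:
  assumes sym: "\<And>u v. E u v \<Longrightarrow> E v u" and irr: "\<And>u. \<not> E u u" and sV: "set [a,b,c,d] \<subseteq> V" and "distinct [a,b,c,d]"
   and "E a b" "E b c" "E c d" "E d a" "\<not> E a c" "\<not> E b d"
  shows "has_induced_C V E 4"
proof -
  have l: "length [a,b,c,d] = 4" by simp
  have "induced_cycle E [a,b,c,d]"
    unfolding induced_cycle_def l all4 using assms by (auto simp: irr)
  then show ?thesis unfolding has_induced_C_def using sV l by blast
qed

lemma mkC6:
  assumes sym: "\<And>u v. E u v \<Longrightarrow> E v u" and irr: "\<And>u. \<not> E u u" and sV: "set [a,b,c,d,e,f] \<subseteq> V" and "distinct [a,b,c,d,e,f]"
   and "E a b" "E b c" "E c d" "E d e" "E e f" "E f a"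
   and "\<not> E a c" "\<not> E a d" "\<not> E a e" "\<not> E b d" "\<not> E b e" "\<not> E b f" "\<not> E c e" "\<not> E c f" "\<not> E d f"
  shows "has_induced_C V E 6"
proof -
  have l: "length [a,b,c,d,e,f] = 6" by simp
  have "induced_cycle E [a,b,c,d,e,f]"
    unfolding induced_cycle_def l all6 using assms by (auto simp: irr)
  then show ?thesis unfolding has_induced_C_def using sV l by blast
qed

lemma mkP4:
  assumes sym: "\<And>u v. E u v \<Longrightarrow> E v u" and irr: "\<And>u. \<not> E u u" and "distinct [a,b,c,d]"
   and "E a b" "E b c" "E c d" "\<not> E a c" "\<not> E b d" "\<not> E a d"
  shows "induces_P4 E {a,b,c,d}"
proof -
  have l: "length [a,b,c,d] = 4" by simp
  have "induced_path E [a,b,c,d]"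
    unfolding induced_path_def l all4 using assms by (auto simp: irr)
  then show ?thesis unfolding induces_P4_def using l by (metis list.set(1) list.set(2))
qed

lemma P4char:
  assumes sym: "\<And>u v. E u v \<Longrightarrow> E v u" and P: "induces_P4 E {a,b,c,d}"
   and bc: "E b c" and ad: "\<not> E a d"
  shows "(E a b \<and> \<not> E a c \<and> E c d \<and> \<not> E b d) \<or> (E a c \<and> \<not> E a b \<and> E b d \<and> \<not> E c d)"
proof -
  obtain xs where xs: "set xs = {a,b,c,d}" "length xs = 4" "induced_path E xs"
    using P unfolding induces_P4_def by blast
  then obtain p0 p1 p2 p3 where l: "xs = [p0,p1,p2,p3]"
    by (auto simp: numeral_eq_Suc length_Suc_conv)
  have l4: "length [p0,p1,p2,p3] = 4" by simp
  have d: "distinct [p0,p1,p2,p3]" and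
    e: "E p0 p1" "E p1 p2" "E p2 p3" "\<not> E p0 p2" "\<not> E p1 p3" "\<not> E p0 p3"
    using xs(3) unfolding l induced_path_def l4 all4 by auto
  have e2: "E p1 p0" "E p2 p1" "E p3 p2" "\<not> E p2 p0" "\<not> E p3 p1" "\<not> E p3 p0"
    using e sym by blast+
  have bc2: "E c b" and ad2: "\<not> E d a" using bc ad sym by blast+
  have s: "{p0,p1,p2,p3} = {a,b,c,d}" using xs(1) l by simp
  have dd: "distinct [a,b,c,d]"
  proof -
    have "card {p0,p1,p2,p3} = 4" using d by simp
    then have "card {a,b,c,d} = 4" using s by simp
    then show ?thesis by (auto simp: card_insert_if split: if_splits)
  qed
  have m: "a = p0 \<or> a = p1 \<or> a = p2 \<or> a = p3" "b = p0 \<or> b = p1 \<or> b = p2 \<or> b = p3"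
    "c = p0 \<or> c = p1 \<or> c = p2 \<or> c = p3" "d = p0 \<or> d = p1 \<or> d = p2 \<or> d = p3"
    using s by blast+
  show ?thesis using m d dd e e2 bc bc2 ad ad2
    by (elim disjE; simp)
qed

lemma core:
  fixes C0 C1 C2 C3 C4 :: "'a set"
  assumes sym: "\<And>u v. E u v \<Longrightarrow> E v u" and irr: "\<And>u. \<not> E u u"
    and V0: "C0 \<subseteq> V" and V1: "C1 \<subseteq> V" and V2: "C2 \<subseteq> V" and V3: "C3 \<subseteq> V" and V4: "C4 \<subseteq> V"
    and xV: "x \<in> V"
    and cl0: "clique E C0" and cl1: "clique E C1" and cl4: "clique E C4"
    and dj: "C0 \<inter> C1 = {}" "C0 \<inter> C2 = {}" "C0 \<inter> C3 = {}" "C0 \<inter> C4 = {}"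
      "C1 \<inter> C2 = {}" "C1 \<inter> C3 = {}" "C1 \<inter> C4 = {}" "C2 \<inter> C3 = {}" "C2 \<inter> C4 = {}" "C3 \<inter> C4 = {}"
    and xC: "x \<notin> C0" "x \<notin> C1" "x \<notin> C2" "x \<notin> C3" "x \<notin> C4"
    and ac02: "anticomplete E C0 C2" and ac13: "anticomplete E C1 C3" and ac24: "anticomplete E C2 C4"
    and ac30: "anticomplete E C3 C0" and ac41: "anticomplete E C4 C1"
    and q0: "q0 \<in> C0" "complete E {q0} (C4 \<union> C1)"
    and q1: "q1 \<in> C1" "complete E {q1} (C0 \<union> C2)"
    and q2: "q2 \<in> C2" "complete E {q2} (C1 \<union> C3)"
    and q3: "q3 \<in> C3" "complete E {q3} (C2 \<union> C4)"
    and q4: "q4 \<in> C4" "complete E {q4} (C3 \<union> C0)"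
    and nb01: "\<forall>v\<in>C0. \<exists>u\<in>C1. E v u"
    and noP4: "\<not> (\<exists>a\<in>C4. \<exists>b\<in>C0. \<exists>c\<in>C0. \<exists>d\<in>C1. b \<noteq> c \<and> induces_P4 E {a, b, c, d})"
    and x4: "\<exists>u\<in>C4. E x u" and x0: "\<exists>u\<in>C0. E x u" and x1: "\<exists>u\<in>C1. E x u"
    and x2: "\<forall>u\<in>C2. \<not> E x u" and x3: "\<forall>u\<in>C3. \<not> E x u"
    and ncomp: "\<exists>a\<in>C0. \<not> E x a"
    and noC4: "\<not> has_induced_C V E 4" and noC6: "\<not> has_induced_C V E 6"
    and hyp: "anticomplete E (C0 - nbhd V E x) (C1 \<inter> nbhd V E x)"
  shows "(q0 \<in> C0 \<inter> nbhd V E x \<and> q1 \<in> C1 - nbhd V E x)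
    \<and> complete E (C0 \<inter> nbhd V E x) (C4 \<inter> nbhd V E x)
    \<and> complete E (C0 \<inter> nbhd V E x) (C1 \<inter> nbhd V E x)
    \<and> (\<forall>a \<in> C0 - nbhd V E x. \<forall>b \<in> C0 \<inter> nbhd V E x.
          nbhd V E a \<inter> (C4 \<union> C1) \<subset> nbhd V E b \<inter> (C4 \<union> C1))
    \<and> (\<forall>a \<in> C4 - nbhd V E x. \<forall>b \<in> C4 \<inter> nbhd V E x.
          nbhd V E a \<inter> (C3 \<union> C0) \<subseteq> nbhd V E b \<inter> (C3 \<union> C0))
    \<and> (\<exists>b \<in> C4 \<inter> nbhd V E x. complete E {b} (C3 \<union> C0))"
proof -
  have Esym: "\<And>u v. E u v = E v u" using sym by blast
  have Nx: "\<And>y. y \<in> nbhd V E x \<longleftrightarrow> y \<in> V \<and> E x y" by (simp add: nbhd_def)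
  have hypP: "\<And>a c. a \<in> C0 \<Longrightarrow> \<not> E x a \<Longrightarrow> c \<in> C1 \<Longrightarrow> E x c \<Longrightarrow> \<not> E a c"
    using hyp V0 V1 unfolding anticomplete_def nbhd_def by blast
  have n02: "\<And>u v. u \<in> C0 \<Longrightarrow> v \<in> C2 \<Longrightarrow> \<not> E u v" "\<And>u v. u \<in> C0 \<Longrightarrow> v \<in> C2 \<Longrightarrow> \<not> E v u"
    using ac02 sym unfolding anticomplete_def by blast+
  have n13: "\<And>u v. u \<in> C1 \<Longrightarrow> v \<in> C3 \<Longrightarrow> \<not> E u v" "\<And>u v. u \<in> C1 \<Longrightarrow> v \<in> C3 \<Longrightarrow> \<not> E v u"
    using ac13 sym unfolding anticomplete_def by blast+
  have n24: "\<And>u v. u \<in> C2 \<Longrightarrow> v \<in> C4 \<Longrightarrow> \<not> E u v" "\<And>u v. u \<in> C2 \<Longrightarrow> v \<in> C4 \<Longrightarrow> \<not> E v u"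
    using ac24 sym unfolding anticomplete_def by blast+
  have n30: "\<And>u v. u \<in> C3 \<Longrightarrow> v \<in> C0 \<Longrightarrow> \<not> E u v" "\<And>u v. u \<in> C3 \<Longrightarrow> v \<in> C0 \<Longrightarrow> \<not> E v u"
    using ac30 sym unfolding anticomplete_def by blast+
  have n41: "\<And>u v. u \<in> C4 \<Longrightarrow> v \<in> C1 \<Longrightarrow> \<not> E u v" "\<And>u v. u \<in> C4 \<Longrightarrow> v \<in> C1 \<Longrightarrow> \<not> E v u"
    using ac41 sym unfolding anticomplete_def by blast+
  have e0: "\<And>u. u \<in> C4 \<Longrightarrow> E q0 u" "\<And>u. u \<in> C1 \<Longrightarrow> E q0 u"
    "\<And>u. u \<in> C4 \<Longrightarrow> E u q0" "\<And>u. u \<in> C1 \<Longrightarrow> E u q0"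
    using q0(2) sym unfolding complete_def by blast+
  have e1: "\<And>u. u \<in> C0 \<Longrightarrow> E q1 u" "\<And>u. u \<in> C2 \<Longrightarrow> E q1 u"
    "\<And>u. u \<in> C0 \<Longrightarrow> E u q1" "\<And>u. u \<in> C2 \<Longrightarrow> E u q1"
    using q1(2) sym unfolding complete_def by blast+
  have e2: "\<And>u. u \<in> C1 \<Longrightarrow> E q2 u" "\<And>u. u \<in> C3 \<Longrightarrow> E q2 u"
    "\<And>u. u \<in> C1 \<Longrightarrow> E u q2" "\<And>u. u \<in> C3 \<Longrightarrow> E u q2"
    using q2(2) sym unfolding complete_def by blast+
  have e3: "\<And>u. u \<in> C2 \<Longrightarrow> E q3 u" "\<And>u. u \<in> C4 \<Longrightarrow> E q3 u"
    "\<And>u. u \<in> C2 \<Longrightarrow> E u q3" "\<And>u. u \<in> C4 \<Longrightarrow> E u q3"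
    using q3(2) sym unfolding complete_def by blast+
  have e4: "\<And>u. u \<in> C3 \<Longrightarrow> E q4 u" "\<And>u. u \<in> C0 \<Longrightarrow> E q4 u"
    "\<And>u. u \<in> C3 \<Longrightarrow> E u q4" "\<And>u. u \<in> C0 \<Longrightarrow> E u q4"
    using q4(2) sym unfolding complete_def by blast+
  have k0: "\<And>u v. u \<in> C0 \<Longrightarrow> v \<in> C0 \<Longrightarrow> u \<noteq> v \<Longrightarrow> E u v" using cl0 unfolding clique_def by blast
  have k1: "\<And>u v. u \<in> C1 \<Longrightarrow> v \<in> C1 \<Longrightarrow> u \<noteq> v \<Longrightarrow> E u v" using cl1 unfolding clique_def by blast
  have k4: "\<And>u v. u \<in> C4 \<Longrightarrow> v \<in> C4 \<Longrightarrow> u \<noteq> v \<Longrightarrow> E u v" using cl4 unfolding clique_def by blast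
  have nx2: "\<And>u. u \<in> C2 \<Longrightarrow> \<not> E x u" "\<And>u. u \<in> C2 \<Longrightarrow> \<not> E u x" using x2 sym by blast+
  have nx3: "\<And>u. u \<in> C3 \<Longrightarrow> \<not> E x u" "\<And>u. u \<in> C3 \<Longrightarrow> \<not> E u x" using x3 sym by blast+
  have d: "\<And>u v. u \<in> C0 \<Longrightarrow> v \<in> C1 \<Longrightarrow> u \<noteq> v" "\<And>u v. u \<in> C0 \<Longrightarrow> v \<in> C2 \<Longrightarrow> u \<noteq> v"
    "\<And>u v. u \<in> C0 \<Longrightarrow> v \<in> C3 \<Longrightarrow> u \<noteq> v" "\<And>u v. u \<in> C0 \<Longrightarrow> v \<in> C4 \<Longrightarrow> u \<noteq> v"
    "\<And>u v. u \<in> C1 \<Longrightarrow> v \<in> C2 \<Longrightarrow> u \<noteq> v" "\<And>u v. u \<in> C1 \<Longrightarrow> v \<in> C3 \<Longrightarrow> u \<noteq> v"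
    "\<And>u v. u \<in> C1 \<Longrightarrow> v \<in> C4 \<Longrightarrow> u \<noteq> v" "\<And>u v. u \<in> C2 \<Longrightarrow> v \<in> C3 \<Longrightarrow> u \<noteq> v"
    "\<And>u v. u \<in> C2 \<Longrightarrow> v \<in> C4 \<Longrightarrow> u \<noteq> v" "\<And>u v. u \<in> C3 \<Longrightarrow> v \<in> C4 \<Longrightarrow> u \<noteq> v"
    using dj by blast+
  have dx: "\<And>u. u \<in> C0 \<Longrightarrow> u \<noteq> x" "\<And>u. u \<in> C1 \<Longrightarrow> u \<noteq> x" "\<And>u. u \<in> C2 \<Longrightarrow> u \<noteq> x"
    "\<And>u. u \<in> C3 \<Longrightarrow> u \<noteq> x" "\<And>u. u \<in> C4 \<Longrightarrow> u \<noteq> x" using xC by blast+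
  have inV: "\<And>u. u \<in> C0 \<Longrightarrow> u \<in> V" "\<And>u. u \<in> C1 \<Longrightarrow> u \<in> V" "\<And>u. u \<in> C2 \<Longrightarrow> u \<in> V"
    "\<And>u. u \<in> C3 \<Longrightarrow> u \<in> V" "\<And>u. u \<in> C4 \<Longrightarrow> u \<in> V" using V0 V1 V2 V3 V4 by blast+
  have d': "\<And>u v. u \<in> C0 \<Longrightarrow> v \<in> C1 \<Longrightarrow> v \<noteq> u" "\<And>u v. u \<in> C0 \<Longrightarrow> v \<in> C2 \<Longrightarrow> v \<noteq> u"
    "\<And>u v. u \<in> C0 \<Longrightarrow> v \<in> C3 \<Longrightarrow> v \<noteq> u" "\<And>u v. u \<in> C0 \<Longrightarrow> v \<in> C4 \<Longrightarrow> v \<noteq> u"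
    "\<And>u v. u \<in> C1 \<Longrightarrow> v \<in> C2 \<Longrightarrow> v \<noteq> u" "\<And>u v. u \<in> C1 \<Longrightarrow> v \<in> C3 \<Longrightarrow> v \<noteq> u"
    "\<And>u v. u \<in> C1 \<Longrightarrow> v \<in> C4 \<Longrightarrow> v \<noteq> u" "\<And>u v. u \<in> C2 \<Longrightarrow> v \<in> C3 \<Longrightarrow> v \<noteq> u"
    "\<And>u v. u \<in> C2 \<Longrightarrow> v \<in> C4 \<Longrightarrow> v \<noteq> u" "\<And>u v. u \<in> C3 \<Longrightarrow> v \<in> C4 \<Longrightarrow> v \<noteq> u"
    using dj by blast+
  have dx': "\<And>u. u \<in> C0 \<Longrightarrow> x \<noteq> u" "\<And>u. u \<in> C1 \<Longrightarrow> x \<noteq> u" "\<And>u. u \<in> C2 \<Longrightarrow> x \<noteq> u"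
    "\<And>u. u \<in> C3 \<Longrightarrow> x \<noteq> u" "\<And>u. u \<in> C4 \<Longrightarrow> x \<noteq> u" using xC by blast+
  note facts = d' dx' n02 n13 n24 n30 n41 e0 e1 e2 e3 e4 nx2 nx3 d dx inV xV q0(1) q1(1) q2(1) q3(1) q4(1)
  obtain c0 where c0: "c0 \<in> C1" "E x c0" using x1 by blast
  obtain w0 where w0: "w0 \<in> C4" "E x w0" using x4 by blast
  obtain a0 where a0: "a0 \<in> C0" "\<not> E x a0" using ncomp by blast
  have nq1: "\<not> E x q1"
  proof
    assume "E x q1"
    then have "\<not> E a0 q1" using hypP[OF a0 q1(1)] by blast
    then show False using e1(3)[OF a0(1)] by blast
  qed
  have xq0: "E x q0"
  proof (rule ccontr)
    assume "\<not> E x q0"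
    then have "\<not> E q0 c0" using hypP[OF q0(1) _ c0] by blast
    then show False using e0(2)[OF c0(1)] by blast
  qed
  have c01: "E b c" if b: "b \<in> C0" "E x b" and c: "c \<in> C1" "E x c" for b c
  proof (rule ccontr)
    assume nbc: "\<not> E b c"
    have cq: "c \<noteq> q1" using c nq1 by blast
    have "has_induced_C V E 4"
      by (rule mkC4[of E b x c q1 V, OF sym irr]) (use b c nbc cq nq1 in \<open>auto simp: facts Esym k1\<close>)
    then show False using noC4 by blast
  qed
  have c04: "E b w" if b: "b \<in> C0" "E x b" and w: "w \<in> C4" "E x w" for b w
  proof (rule ccontr)
    assume nbw: "\<not> E b w"
    have "has_induced_C V E 6"
      by (rule mkC6[of E x w q3 q2 q1 b V, OF sym irr]) (use b w nbw nq1 in \<open>auto simp: facts Esym\<close>)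
    then show False using noC6 by blast
  qed
  have p3: "E b u" if a: "a \<in> C0" "\<not> E x a" and b: "b \<in> C0" "E x b" and u: "u \<in> C4 \<union> C1" "E a u" for a b u
  proof (rule ccontr)
    assume nbu: "\<not> E b u"
    have ab: "a \<noteq> b" using a b by blast
    have Eab: "E a b" using k0[OF a(1) b(1) ab] .
    show False
    proof (cases "u \<in> C4")
      case True
      show False
      proof (cases "E x u")
        case True
        have "has_induced_C V E 4"
          by (rule mkC4[of E b x u a V, OF sym irr]) (use a b u nbu \<open>u \<in> C4\<close> True Eab ab in \<open>auto simp: facts Esym\<close>)
        then show False using noC4 by blast
      next
        case False
        have "induces_P4 E {u, a, b, c0}"
          by (rule mkP4[OF sym irr]) (use a b u nbu \<open>u \<in> C4\<close> False Eab ab c0 c01[OF b c0] hypP[OF a c0] in \<open>auto simp: facts Esym\<close>)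
        then show False using noP4 \<open>u \<in> C4\<close> a b c0 ab by blast
      qed
    next
      case False
      then have u1: "u \<in> C1" using u by blast
      have nxu: "\<not> E x u" using hypP[OF a u1] u by blast
      have cu: "c0 \<noteq> u" using c0 nxu by blast
      have "has_induced_C V E 4"
        by (rule mkC4[of E a b c0 u V, OF sym irr]) (use a b u1 u nbu c0 cu Eab ab c01[OF b c0] hypP[OF a c0] k1[OF c0(1) u1 cu] in \<open>auto simp: facts Esym\<close>)
      then show False using noC4 by blast
    qed
  qed
  have p4: "E b u" if a: "a \<in> C4" "\<not> E x a" and b: "b \<in> C4" "E x b" and u: "u \<in> C3 \<union> C0" "E a u" for a b u
  proof (rule ccontr)
    assume nbu: "\<not> E b u"
    have ab: "a \<noteq> b" using a b by blast
    have Eab: "E a b" using k4[OF a(1) b(1) ab] .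
    show False
    proof (cases "u \<in> C0")
      case u0: True
      show False
      proof (cases "E x u")
        case True
        have "has_induced_C V E 4"
          by (rule mkC4[of E b x u a V, OF sym irr]) (use a b u nbu u0 True Eab ab in \<open>auto simp: facts Esym\<close>)
        then show False using noC4 by blast
      next
        case False
        obtain dd where dd: "dd \<in> C1" "E u dd" using nb01 u0 by blast
        have nxd: "\<not> E x dd" using hypP[OF u0 False dd(1)] dd by blast
        have cd: "c0 \<noteq> dd" using c0 nxd by blast
        have "has_induced_C V E 6"
          by (rule mkC6[of E u a b x c0 dd V, OF sym irr]) (use a b u u0 nbu False dd nxd cd c0 Eab ab hypP[OF u0 False c0] k1[OF c0(1) dd(1) cd] in \<open>auto simp: facts Esym\<close>)
        then show False using noC6 by blast
      qed
    next
      case False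
      then have u3: "u \<in> C3" using u by blast
      have "has_induced_C V E 6"
        by (rule mkC6[of E u a b x c0 q2 V, OF sym irr]) (use a b u3 nbu c0 Eab ab u in \<open>auto simp: facts Esym\<close>)
      then show False using noC6 by blast
    qed
  qed
  show ?thesis
  proof (intro conjI ballI)
    show "q0 \<in> C0 \<inter> nbhd V E x" using xq0 q0 V0 by (auto simp: Nx)
    show "q1 \<in> C1 - nbhd V E x" using nq1 q1 by (auto simp: Nx)
    show "complete E (C0 \<inter> nbhd V E x) (C4 \<inter> nbhd V E x)" using c04 by (auto simp: complete_def Nx)
    show "complete E (C0 \<inter> nbhd V E x) (C1 \<inter> nbhd V E x)" using c01 by (auto simp: complete_def Nx)
  next
    fix a b assume a: "a \<in> C0 - nbhd V E x" and b: "b \<in> C0 \<inter> nbhd V E x"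
    have a': "a \<in> C0" "\<not> E x a" using a V0 by (auto simp: Nx)
    have b': "b \<in> C0" "E x b" using b by (auto simp: Nx)
    have sub: "nbhd V E a \<inter> (C4 \<union> C1) \<subseteq> nbhd V E b \<inter> (C4 \<union> C1)"
      using p3[OF a' b'] by (auto simp: nbhd_def)
    have "c0 \<in> nbhd V E b \<inter> (C4 \<union> C1)" "c0 \<notin> nbhd V E a \<inter> (C4 \<union> C1)"
      using c01[OF b' c0] hypP[OF a' c0] c0 V1 by (auto simp: nbhd_def)
    then show "nbhd V E a \<inter> (C4 \<union> C1) \<subset> nbhd V E b \<inter> (C4 \<union> C1)" using sub by blast
  next
    fix a b assume a: "a \<in> C4 - nbhd V E x" and b: "b \<in> C4 \<inter> nbhd V E x"
    have a': "a \<in> C4" "\<not> E x a" using a V4 by (auto simp: Nx)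
    have b': "b \<in> C4" "E x b" using b by (auto simp: Nx)
    show "nbhd V E a \<inter> (C3 \<union> C0) \<subseteq> nbhd V E b \<inter> (C3 \<union> C0)"
      using p4[OF a' b'] by (auto simp: nbhd_def)
  next
    show "\<exists>b \<in> C4 \<inter> nbhd V E x. complete E {b} (C3 \<union> C0)"
    proof (cases "E x q4")
      case True
      then have "q4 \<in> C4 \<inter> nbhd V E x" using q4 V4 by (auto simp: Nx)
      then show ?thesis using q4(2) by blast
    next
      case False
      have "complete E {w0} (C3 \<union> C0)"
        using p4[OF q4(1) False w0] e4 by (auto simp: complete_def)
      moreover have "w0 \<in> C4 \<inter> nbhd V E x" using w0 V4 by (auto simp: Nx)
      ultimately show ?thesis by blast
    qed
  qed
qed

lemma noP4ext:
  fixes D0 D1 D2 D3 D4 :: "'a set"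
  assumes sym: "\<And>u v. E u v \<Longrightarrow> E v u" and irr: "\<And>u. \<not> E u u"
    and V0: "D0 \<subseteq> V" and V1: "D1 \<subseteq> V" and V2: "D2 \<subseteq> V" and V3: "D3 \<subseteq> V" and V4: "D4 \<subseteq> V"
    and cl0: "clique E D0" and cl1: "clique E D1" and cl4: "clique E D4"
    and dj: "D0 \<inter> D1 = {}" "D0 \<inter> D2 = {}" "D0 \<inter> D3 = {}" "D0 \<inter> D4 = {}"
      "D1 \<inter> D2 = {}" "D1 \<inter> D3 = {}" "D1 \<inter> D4 = {}" "D2 \<inter> D3 = {}" "D2 \<inter> D4 = {}" "D3 \<inter> D4 = {}"
    and ac02: "anticomplete E D0 D2" and ac13: "anticomplete E D1 D3" and ac24: "anticomplete E D2 D4"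
    and ac30: "anticomplete E D3 D0" and ac41: "anticomplete E D4 D1"
    and q2: "q2 \<in> D2" "complete E {q2} (D1 \<union> D3)"
    and q3: "q3 \<in> D3" "complete E {q3} (D2 \<union> D4)"
    and nb04: "\<forall>v\<in>D0. \<exists>u\<in>D4. E v u" and nb01: "\<forall>v\<in>D0. \<exists>u\<in>D1. E v u"
    and noC6: "\<not> has_induced_C V E 6"
  shows "\<not> (\<exists>a\<in>D4. \<exists>b\<in>D0. \<exists>c\<in>D0. \<exists>d\<in>D1. b \<noteq> c \<and> induces_P4 E {a, b, c, d})"
    and "\<not> (\<exists>a\<in>D0. \<exists>b\<in>D1. \<exists>c\<in>D1. \<exists>d\<in>D2. b \<noteq> c \<and> induces_P4 E {a, b, c, d})"
    and "\<not> (\<exists>a\<in>D3. \<exists>b\<in>D4. \<exists>c\<in>D4. \<exists>d\<in>D0. b \<noteq> c \<and> induces_P4 E {a, b, c, d})"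
proof -
  have Esym: "\<And>u v. E u v = E v u" using sym by blast
  have n02: "\<And>u v. u \<in> D0 \<Longrightarrow> v \<in> D2 \<Longrightarrow> \<not> E u v" "\<And>u v. u \<in> D0 \<Longrightarrow> v \<in> D2 \<Longrightarrow> \<not> E v u"
    using ac02 sym unfolding anticomplete_def by blast+
  have n13: "\<And>u v. u \<in> D1 \<Longrightarrow> v \<in> D3 \<Longrightarrow> \<not> E u v" "\<And>u v. u \<in> D1 \<Longrightarrow> v \<in> D3 \<Longrightarrow> \<not> E v u"
    using ac13 sym unfolding anticomplete_def by blast+
  have n24: "\<And>u v. u \<in> D2 \<Longrightarrow> v \<in> D4 \<Longrightarrow> \<not> E u v" "\<And>u v. u \<in> D2 \<Longrightarrow> v \<in> D4 \<Longrightarrow> \<not> E v u"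
    using ac24 sym unfolding anticomplete_def by blast+
  have n30: "\<And>u v. u \<in> D3 \<Longrightarrow> v \<in> D0 \<Longrightarrow> \<not> E u v" "\<And>u v. u \<in> D3 \<Longrightarrow> v \<in> D0 \<Longrightarrow> \<not> E v u"
    using ac30 sym unfolding anticomplete_def by blast+
  have n41: "\<And>u v. u \<in> D4 \<Longrightarrow> v \<in> D1 \<Longrightarrow> \<not> E u v" "\<And>u v. u \<in> D4 \<Longrightarrow> v \<in> D1 \<Longrightarrow> \<not> E v u"
    using ac41 sym unfolding anticomplete_def by blast+
  have e2: "\<And>u. u \<in> D1 \<Longrightarrow> E q2 u" "\<And>u. u \<in> D3 \<Longrightarrow> E q2 u"
    "\<And>u. u \<in> D1 \<Longrightarrow> E u q2" "\<And>u. u \<in> D3 \<Longrightarrow> E u q2"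
    using q2(2) sym unfolding complete_def by blast+
  have e3: "\<And>u. u \<in> D2 \<Longrightarrow> E q3 u" "\<And>u. u \<in> D4 \<Longrightarrow> E q3 u"
    "\<And>u. u \<in> D2 \<Longrightarrow> E u q3" "\<And>u. u \<in> D4 \<Longrightarrow> E u q3"
    using q3(2) sym unfolding complete_def by blast+
  have k0: "\<And>u v. u \<in> D0 \<Longrightarrow> v \<in> D0 \<Longrightarrow> u \<noteq> v \<Longrightarrow> E u v" using cl0 unfolding clique_def by blast
  have k1: "\<And>u v. u \<in> D1 \<Longrightarrow> v \<in> D1 \<Longrightarrow> u \<noteq> v \<Longrightarrow> E u v" using cl1 unfolding clique_def by blast
  have k4: "\<And>u v. u \<in> D4 \<Longrightarrow> v \<in> D4 \<Longrightarrow> u \<noteq> v \<Longrightarrow> E u v" using cl4 unfolding clique_def by blast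
  have d: "\<And>u v. u \<in> D0 \<Longrightarrow> v \<in> D1 \<Longrightarrow> u \<noteq> v" "\<And>u v. u \<in> D0 \<Longrightarrow> v \<in> D2 \<Longrightarrow> u \<noteq> v"
    "\<And>u v. u \<in> D0 \<Longrightarrow> v \<in> D3 \<Longrightarrow> u \<noteq> v" "\<And>u v. u \<in> D0 \<Longrightarrow> v \<in> D4 \<Longrightarrow> u \<noteq> v"
    "\<And>u v. u \<in> D1 \<Longrightarrow> v \<in> D2 \<Longrightarrow> u \<noteq> v" "\<And>u v. u \<in> D1 \<Longrightarrow> v \<in> D3 \<Longrightarrow> u \<noteq> v"
    "\<And>u v. u \<in> D1 \<Longrightarrow> v \<in> D4 \<Longrightarrow> u \<noteq> v" "\<And>u v. u \<in> D2 \<Longrightarrow> v \<in> D3 \<Longrightarrow> u \<noteq> v"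
    "\<And>u v. u \<in> D2 \<Longrightarrow> v \<in> D4 \<Longrightarrow> u \<noteq> v" "\<And>u v. u \<in> D3 \<Longrightarrow> v \<in> D4 \<Longrightarrow> u \<noteq> v"
    using dj by blast+
  have d': "\<And>u v. u \<in> D0 \<Longrightarrow> v \<in> D1 \<Longrightarrow> v \<noteq> u" "\<And>u v. u \<in> D0 \<Longrightarrow> v \<in> D2 \<Longrightarrow> v \<noteq> u"
    "\<And>u v. u \<in> D0 \<Longrightarrow> v \<in> D3 \<Longrightarrow> v \<noteq> u" "\<And>u v. u \<in> D0 \<Longrightarrow> v \<in> D4 \<Longrightarrow> v \<noteq> u"
    "\<And>u v. u \<in> D1 \<Longrightarrow> v \<in> D2 \<Longrightarrow> v \<noteq> u" "\<And>u v. u \<in> D1 \<Longrightarrow> v \<in> D3 \<Longrightarrow> v \<noteq> u"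
    "\<And>u v. u \<in> D1 \<Longrightarrow> v \<in> D4 \<Longrightarrow> v \<noteq> u" "\<And>u v. u \<in> D2 \<Longrightarrow> v \<in> D3 \<Longrightarrow> v \<noteq> u"
    "\<And>u v. u \<in> D2 \<Longrightarrow> v \<in> D4 \<Longrightarrow> v \<noteq> u" "\<And>u v. u \<in> D3 \<Longrightarrow> v \<in> D4 \<Longrightarrow> v \<noteq> u"
    using dj by blast+
  have inV: "\<And>u. u \<in> D0 \<Longrightarrow> u \<in> V" "\<And>u. u \<in> D1 \<Longrightarrow> u \<in> V" "\<And>u. u \<in> D2 \<Longrightarrow> u \<in> V"
    "\<And>u. u \<in> D3 \<Longrightarrow> u \<in> V" "\<And>u. u \<in> D4 \<Longrightarrow> u \<in> V" using V0 V1 V2 V3 V4 by blast+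
  note facts = d d' n02 n13 n24 n30 n41 e2 e3 inV q2(1) q3(1)
  have key1: False if prem: "a \<in> D4" "b \<in> D0" "c \<in> D0" "d \<in> D1" "b \<noteq> c" "E a b" "\<not> E a c" "E c d" "\<not> E b d" for a b c d
  proof -
    have bc: "E b c" using k0 prem(2,3,5) by blast
    have "has_induced_C V E 6"
      by (rule mkC6[of E a b c d q2 q3 V, OF sym irr]) (use prem bc in \<open>auto simp: facts Esym\<close>)
    then show False using noC6 by blast
  qed
  have key2: False if prem: "a \<in> D0" "b \<in> D1" "c \<in> D1" "d \<in> D2" "b \<noteq> c" "E a b" "\<not> E a c" "E c d" "\<not> E b d" for a b c d
  proof -
    obtain w where w: "w \<in> D4" "E a w" using nb04 prem(1) by blast
    have bc: "E b c" using k1 prem(2,3,5) by blast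
    have "has_induced_C V E 6"
      by (rule mkC6[of E a b c d q3 w V, OF sym irr]) (use prem bc w in \<open>auto simp: facts Esym\<close>)
    then show False using noC6 by blast
  qed
  have key3: False if prem: "a \<in> D3" "b \<in> D4" "c \<in> D4" "d \<in> D0" "b \<noteq> c" "E a b" "\<not> E a c" "E c d" "\<not> E b d" for a b c d
  proof -
    obtain y where y: "y \<in> D1" "E d y" using nb01 prem(4) by blast
    have bc: "E b c" using k4 prem(2,3,5) by blast
    have "has_induced_C V E 6"
      by (rule mkC6[of E a b c d y q2 V, OF sym irr]) (use prem bc y in \<open>auto simp: facts Esym\<close>)
    then show False using noC6 by blast
  qed
  show "\<not> (\<exists>a\<in>D4. \<exists>b\<in>D0. \<exists>c\<in>D0. \<exists>d\<in>D1. b \<noteq> c \<and> induces_P4 E {a, b, c, d})"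
  proof
    assume "\<exists>a\<in>D4. \<exists>b\<in>D0. \<exists>c\<in>D0. \<exists>d\<in>D1. b \<noteq> c \<and> induces_P4 E {a, b, c, d}"
    then obtain a b c d where m: "a\<in>D4" "b\<in>D0" "c\<in>D0" "d\<in>D1" "b \<noteq> c" and P: "induces_P4 E {a, b, c, d}" by blast
    have "E b c" using k0 m by blast
    moreover have "\<not> E a d" using n41 m by blast
    ultimately show False using P4char[OF sym P] key1[of a b c d] key1[of a c b d] m by blast
  qed
  show "\<not> (\<exists>a\<in>D0. \<exists>b\<in>D1. \<exists>c\<in>D1. \<exists>d\<in>D2. b \<noteq> c \<and> induces_P4 E {a, b, c, d})"
  proof
    assume "\<exists>a\<in>D0. \<exists>b\<in>D1. \<exists>c\<in>D1. \<exists>d\<in>D2. b \<noteq> c \<and> induces_P4 E {a, b, c, d}"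
    then obtain a b c d where m: "a\<in>D0" "b\<in>D1" "c\<in>D1" "d\<in>D2" "b \<noteq> c" and P: "induces_P4 E {a, b, c, d}" by blast
    have "E b c" using k1 m by blast
    moreover have "\<not> E a d" using n02 m by blast
    ultimately show False using P4char[OF sym P] key2[of a b c d] key2[of a c b d] m by blast
  qed
  show "\<not> (\<exists>a\<in>D3. \<exists>b\<in>D4. \<exists>c\<in>D4. \<exists>d\<in>D0. b \<noteq> c \<and> induces_P4 E {a, b, c, d})"
  proof
    assume "\<exists>a\<in>D3. \<exists>b\<in>D4. \<exists>c\<in>D4. \<exists>d\<in>D0. b \<noteq> c \<and> induces_P4 E {a, b, c, d}"
    then obtain a b c d where m: "a\<in>D3" "b\<in>D4" "c\<in>D4" "d\<in>D0" "b \<noteq> c" and P: "induces_P4 E {a, b, c, d}" by blast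
    have "E b c" using k4 m by blast
    moreover have "\<not> E a d" using n30 m by blast
    ultimately show False using P4char[OF sym P] key3[of a b c d] key3[of a c b d] m by blast
  qed
qed
theorem lemma8p1:
  fixes V :: "'a set" and E :: "'a \<Rightarrow> 'a \<Rightarrow> bool"
    and B :: "nat \<Rightarrow> 'a set" and q :: "nat \<Rightarrow> 'a" and i :: nat and x :: 'a
  assumes G: "graph V E"
    and noP7: "\<not> has_induced_P V E 7"
    and noC4: "\<not> has_induced_C V E 4"
    and noC6: "\<not> has_induced_C V E 6"
    and noC7: "\<not> has_induced_C V E 7"
    and H: "maximal_nice_blowup V E B"
    and q: "\<forall>j<5. q j \<in> B j \<and> complete E {q j} (B ((j + 4) mod 5) \<union> B ((j + 1) mod 5))"
    and i: "i < 5"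
    and x: "x \<in> A3 V E B i"
    and hyp: "anticomplete E (B i - nbhd V E x) (B ((i + 1) mod 5) \<inter> nbhd V E x)"
  shows "(q i \<in> B i \<inter> nbhd V E x \<and> q ((i + 1) mod 5) \<in> B ((i + 1) mod 5) - nbhd V E x)
    \<and> (\<forall>j \<in> {(i + 4) mod 5, (i + 1) mod 5}.
          complete E (B i \<inter> nbhd V E x) (B j \<inter> nbhd V E x))
    \<and> (\<forall>a \<in> B i - nbhd V E x. \<forall>b \<in> B i \<inter> nbhd V E x.
          nbhd V E a \<inter> (B ((i + 4) mod 5) \<union> B ((i + 1) mod 5))
          \<subset> nbhd V E b \<inter> (B ((i + 4) mod 5) \<union> B ((i + 1) mod 5)))
    \<and> (\<forall>a \<in> B ((i + 4) mod 5) - nbhd V E x. \<forall>b \<in> B ((i + 4) mod 5) \<inter> nbhd V E x.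
          nbhd V E a \<inter> (B ((i + 3) mod 5) \<union> B i)
          \<subseteq> nbhd V E b \<inter> (B ((i + 3) mod 5) \<union> B i))
    \<and> (\<exists>b \<in> B ((i + 4) mod 5) \<inter> nbhd V E x. complete E {b} (B ((i + 3) mod 5) \<union> B i))"
proof -
  have sym: "\<And>u v. E u v \<Longrightarrow> E v u" and irr: "\<And>u. \<not> E u u" using G unfolding graph_def by blast+
  have nb: "nice_blowup V E B" and nmax: "\<not> (\<exists>B'. nice_blowup V E B' \<and> VH B \<subset> VH B')"
    using H unfolding maximal_nice_blowup_def by blast+
  have nbV: "\<forall>j<5. B j \<subseteq> V \<and> clique E (B j)"
   and ndj: "\<forall>j<5. \<forall>k<5. j \<noteq> k \<longrightarrow> B j \<inter> B k = {}"
   and nnb: "\<forall>j<5. \<forall>v\<in>B j. (\<exists>u\<in>B ((j + 4) mod 5). E v u) \<and> (\<exists>u\<in>B ((j + 1) mod 5). E v u)"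
   and nac: "\<forall>j<5. anticomplete E (B j) (B ((j + 2) mod 5))"
   and nP4: "\<forall>j<5. \<not> (\<exists>a\<in>B j. \<exists>b\<in>B ((j + 1) mod 5). \<exists>c\<in>B ((j + 1) mod 5). \<exists>d\<in>B ((j + 2) mod 5).
              b \<noteq> c \<and> induces_P4 E {a, b, c, d})"
    using nb unfolding nice_blowup_def by blast+
  define i1 where "i1 = (i + 1) mod 5"
  define i2 where "i2 = (i + 2) mod 5"
  define i3 where "i3 = (i + 3) mod 5"
  define i4 where "i4 = (i + 4) mod 5"
  have icase: "i = 0 \<or> i = 1 \<or> i = 2 \<or> i = 3 \<or> i = 4" using i by arith
  have lt: "i1 < 5" "i2 < 5" "i3 < 5" "i4 < 5" unfolding i1_def i2_def i3_def i4_def by simp_all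
  have neq: "i \<noteq> i1" "i \<noteq> i2" "i \<noteq> i3" "i \<noteq> i4" "i1 \<noteq> i2" "i1 \<noteq> i3" "i1 \<noteq> i4"
    "i2 \<noteq> i3" "i2 \<noteq> i4" "i3 \<noteq> i4"
    using icase unfolding i1_def i2_def i3_def i4_def by auto
  have m: "(i1+4) mod 5 = i" "(i1+1) mod 5 = i2" "(i1+2) mod 5 = i3"
   "(i2+4) mod 5 = i1" "(i2+1) mod 5 = i3" "(i2+2) mod 5 = i4"
   "(i3+4) mod 5 = i2" "(i3+1) mod 5 = i4" "(i3+2) mod 5 = i"
   "(i4+4) mod 5 = i3" "(i4+1) mod 5 = i" "(i4+2) mod 5 = i1"
   "(i+4) mod 5 = i4" "(i+1) mod 5 = i1" "(i+2) mod 5 = i2" "(i+3) mod 5 = i3" "i mod 5 = i"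
    using icase unfolding i1_def i2_def i3_def i4_def by auto
  have jm: "\<And>j. j < 5 \<Longrightarrow> (j + 1) mod 5 = i \<Longrightarrow> j = i4" "\<And>j. j < 5 \<Longrightarrow> (j + 2) mod 5 = i \<Longrightarrow> j = i3"
  proof -
    fix j :: nat assume "j < 5" "(j + 1) mod 5 = i"
    moreover have "j = 0 \<or> j = 1 \<or> j = 2 \<or> j = 3 \<or> j = 4" using \<open>j < 5\<close> by arith
    ultimately show "j = i4" using icase unfolding i4_def by (elim disjE) simp_all
  next
    fix j :: nat assume "j < 5" "(j + 2) mod 5 = i"
    moreover have "j = 0 \<or> j = 1 \<or> j = 2 \<or> j = 3 \<or> j = 4" using \<open>j < 5\<close> by arith
    ultimately show "j = i3" using icase unfolding i3_def by (elim disjE) simp_all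
  qed
  have V0: "B i \<subseteq> V" and V1: "B i1 \<subseteq> V" and V2: "B i2 \<subseteq> V" and V3: "B i3 \<subseteq> V" and V4: "B i4 \<subseteq> V"
    using nbV i lt by blast+
  have cl0: "clique E (B i)" and cl1: "clique E (B i1)" and cl4: "clique E (B i4)"
    using nbV i lt by blast+
  have dj: "B i \<inter> B i1 = {}" "B i \<inter> B i2 = {}" "B i \<inter> B i3 = {}" "B i \<inter> B i4 = {}"
      "B i1 \<inter> B i2 = {}" "B i1 \<inter> B i3 = {}" "B i1 \<inter> B i4 = {}" "B i2 \<inter> B i3 = {}" "B i2 \<inter> B i4 = {}" "B i3 \<inter> B i4 = {}"
    using ndj i lt neq by blast+
  have ac02: "anticomplete E (B i) (B i2)" using nac i m by metis
  have ac13: "anticomplete E (B i1) (B i3)" using nac lt m by metis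
  have ac24: "anticomplete E (B i2) (B i4)" using nac lt m by metis
  have ac30: "anticomplete E (B i3) (B i)" using nac lt m by metis
  have ac41: "anticomplete E (B i4) (B i1)" using nac lt m by metis
  have q0: "q i \<in> B i" "complete E {q i} (B i4 \<union> B i1)" using q i m by metis+
  have q1: "q i1 \<in> B i1" "complete E {q i1} (B i \<union> B i2)" using q lt m by metis+
  have q2: "q i2 \<in> B i2" "complete E {q i2} (B i1 \<union> B i3)" using q lt m by metis+
  have q3: "q i3 \<in> B i3" "complete E {q i3} (B i2 \<union> B i4)" using q lt m by metis+
  have q4: "q i4 \<in> B i4" "complete E {q i4} (B i3 \<union> B i)" using q lt m by metis+
  have nb01: "\<forall>v\<in>B i. \<exists>u\<in>B i1. E v u" and nb04: "\<forall>v\<in>B i. \<exists>u\<in>B i4. E v u"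
    using nnb i m by metis+
  have noP4: "\<not> (\<exists>a\<in>B i4. \<exists>b\<in>B i. \<exists>c\<in>B i. \<exists>d\<in>B i1. b \<noteq> c \<and> induces_P4 E {a, b, c, d})"
    using nP4 lt m by metis
  have xV: "x \<in> V" and xH: "x \<notin> VH B" and sx: "supp E B x = {i4, i, i1}"
    using x m unfolding A3_def i4_def i1_def by auto
  have x4: "\<exists>u\<in>B i4. E x u" and x0: "\<exists>u\<in>B i. E x u" and x1: "\<exists>u\<in>B i1. E x u"
    using sx unfolding supp_def by blast+
  have x2: "\<forall>u\<in>B i2. \<not> E x u" and x3: "\<forall>u\<in>B i3. \<not> E x u"
    using sx lt neq unfolding supp_def by blast+
  have xC: "\<And>k. k < 5 \<Longrightarrow> x \<notin> B k" using xH unfolding VH_def by blast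
  have xC': "x \<notin> B i" "x \<notin> B i1" "x \<notin> B i2" "x \<notin> B i3" "x \<notin> B i4" using xC i lt by blast+
  have ncomp: "\<exists>a\<in>B i. \<not> E x a"
  proof (rule ccontr)
    assume "\<not> (\<exists>a\<in>B i. \<not> E x a)"
    then have xc: "\<forall>a\<in>B i. E x a" by blast
    define B' where "B' = B(i := insert x (B i))"
    have B'i: "B' i = insert x (B i)" and B'o: "\<And>k. k \<noteq> i \<Longrightarrow> B' k = B k" unfolding B'_def by simp_all
    have Bsub: "\<And>k. B k \<subseteq> B' k" unfolding B'_def by auto
    have D0V: "insert x (B i) \<subseteq> V" using xV V0 by blast
    have D0cl: "clique E (insert x (B i))" using cl0 xc sym unfolding clique_def by blast
    have Ddj: "insert x (B i) \<inter> B i1 = {}" "insert x (B i) \<inter> B i2 = {}" "insert x (B i) \<inter> B i3 = {}"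
      "insert x (B i) \<inter> B i4 = {}" using dj xC' by blast+
    have Dac02: "anticomplete E (insert x (B i)) (B i2)" using ac02 x2 unfolding anticomplete_def by blast
    have Dac30: "anticomplete E (B i3) (insert x (B i))" using ac30 x3 sym unfolding anticomplete_def by blast
    have Dnb04: "\<forall>v\<in>insert x (B i). \<exists>u\<in>B i4. E v u" using nb04 x4 by blast
    have Dnb01: "\<forall>v\<in>insert x (B i). \<exists>u\<in>B i1. E v u" using nb01 x1 by blast
    note T = noP4ext[OF sym irr D0V V1 V2 V3 V4 D0cl cl1 cl4 Ddj dj(5-10) Dac02 ac13 ac24 Dac30 ac41
        q2 q3 Dnb04 Dnb01 noC6]
    have P1: "\<forall>j<5. B' j \<subseteq> V \<and> clique E (B' j)"
    proof (intro allI impI)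
      fix j :: nat assume j: "j < 5"
      show "B' j \<subseteq> V \<and> clique E (B' j)"
        using nbV j D0V D0cl B'i B'o by (cases "j = i") auto
    qed
    have P2: "\<forall>j<5. \<forall>k<5. j \<noteq> k \<longrightarrow> B' j \<inter> B' k = {}"
    proof (intro allI impI)
      fix j k :: nat assume j: "j < 5" and k: "k < 5" and jk: "j \<noteq> k"
      show "B' j \<inter> B' k = {}"
        using ndj j k jk B'i B'o xC by (cases "j = i"; cases "k = i") auto
    qed
    have P3: "\<forall>j<5. \<forall>v\<in>B' j. (\<exists>u\<in>B' ((j + 4) mod 5). E v u) \<and> (\<exists>u\<in>B' ((j + 1) mod 5). E v u)"
    proof (intro allI impI ballI)
      fix j v assume j: "j < 5" and v: "v \<in> B' j"
      show "(\<exists>u\<in>B' ((j + 4) mod 5). E v u) \<and> (\<exists>u\<in>B' ((j + 1) mod 5). E v u)"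
      proof (cases "j = i \<and> v = x")
        case True
        then show ?thesis using x4 x1 Bsub m by (metis subsetD)
      next
        case False
        then have "v \<in> B j" using v B'i B'o by (cases "j = i") auto
        then show ?thesis using nnb j Bsub by blast
      qed
    qed
    have P4: "\<forall>j<5. anticomplete E (B' j) (B' ((j + 2) mod 5))"
    proof (intro allI impI)
      fix j :: nat assume j: "j < 5"
      show "anticomplete E (B' j) (B' ((j + 2) mod 5))"
      proof (cases "j = i")
        case True
        then show ?thesis using Dac02 B'i B'o m neq by simp
      next
        case False
        show ?thesis
        proof (cases "(j + 2) mod 5 = i")
          case True
          then have "j = i3" using jm j by blast
          then show ?thesis using Dac30 True B'i B'o neq by simp
        next
          case False2: False
          then show ?thesis using nac j False B'o by simp
        qed
      qed
    qed
    have P5: "\<forall>j<5. \<not> (\<exists>a\<in>B' j. \<exists>b\<in>B' ((j + 1) mod 5). \<exists>c\<in>B' ((j + 1) mod 5). \<exists>d\<in>B' ((j + 2) mod 5).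
              b \<noteq> c \<and> induces_P4 E {a, b, c, d})"
    proof (intro allI impI)
      fix j :: nat assume j: "j < 5"
      show "\<not> (\<exists>a\<in>B' j. \<exists>b\<in>B' ((j + 1) mod 5). \<exists>c\<in>B' ((j + 1) mod 5). \<exists>d\<in>B' ((j + 2) mod 5).
              b \<noteq> c \<and> induces_P4 E {a, b, c, d})"
      proof (cases "j = i")
        case True
        then show ?thesis using T(2) B'i B'o m neq by simp
      next
        case F1: False
        show ?thesis
        proof (cases "(j + 1) mod 5 = i")
          case True
          then have "j = i4" using jm j by blast
          then show ?thesis using T(1) True B'i B'o m neq by simp
        next
          case F2: False
          show ?thesis
          proof (cases "(j + 2) mod 5 = i")
            case True
            then have "j = i3" using jm j by blast
            then show ?thesis using T(3) True B'i B'o m neq by simp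
          next
            case F3: False
            then show ?thesis using nP4 j F1 F2 B'o by simp
          qed
        qed
      qed
    qed
    have "nice_blowup V E B'"
      unfolding nice_blowup_def using P1 P2 P3 P4 P5 by blast
    moreover have "VH B \<subset> VH B'"
    proof -
      have "VH B \<subseteq> VH B'" using Bsub unfolding VH_def by blast
      moreover have "x \<in> VH B'" using B'i i unfolding VH_def by blast
      ultimately show ?thesis using xH by blast
    qed
    ultimately show False using nmax by blast
  qed
  note R = core[OF sym irr V0 V1 V2 V3 V4 xV cl0 cl1 cl4 dj xC' ac02 ac13 ac24 ac30 ac41 q0 q1 q2 q3 q4
     nb01 noP4 x4 x0 x1 x2 x3 ncomp noC4 noC6 hyp[unfolded m]]
  show ?thesis using R unfolding i1_def i2_def i3_def i4_def by simp
qed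

end
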